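(* Let $F:\mathbb{R}^p\to\mathbb{R}$ be bounded from below by a constant $F_{l.b.}$, and suppose that $\dot F(x)=\nabla F(x)$ exists for every $x\in\mathbb{R}^p$ and is locally Lipschitz continuous. Let $x_0\in\mathbb{R}^p$, let $\{M_k:k\ge0\}\subset\mathbb{R}^{p\times p}$ be symmetric positive definite matrices with $\lim_{k\to\infty}\lambda_{\max}(M_k)=0$, and define $x_{k+1}=x_k-M_k\dot F(x_k)$ for $k\ge0$. Let $R\ge 0$. Then there exists $K\in\mathbb{N}$ such that for all $k\ge K$, $$[F(x_{k+1})-F_{l.b.}]\,\chi_{k+1}^0(R)\le\Big[F(x_k)-F_{l.b.}-\tfrac12\lambda_{\min}(M_k)\|\dot F(x_k)\|_2^2\Big]\chi_k^0(R).$$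
   Context: $\lambda_{\min}(M)$ and $\lambda_{\max}(M)$ denote the smallest and largest eigenvalues of a symmetric matrix $M$. For $R\ge 0$ and $k\ge0$, $\chi_k^0(R)$ equals $1$ if $\|x_j\|_2\le R$ for all $0\le j\le k$, and $0$ otherwise. *)

theory Defs
  imports "HOL-Analysis.Analysis"
begin

definition mat_eigenvalues :: "real^'n^'n \<Rightarrow> real set" where
  "mat_eigenvalues M = {l. \<exists>v. v \<noteq> 0 \<and> M *v v = l *\<^sub>R v}"

definition lambda_min :: "real^'n^'n \<Rightarrow> real" where
  "lambda_min M = Min (mat_eigenvalues M)"

definition lambda_max :: "real^'n^'n \<Rightarrow> real" where
  "lambda_max M = Max (mat_eigenvalues M)"

definition symmetric_mat :: "real^'n^'n \<Rightarrow> bool" where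
  "symmetric_mat M \<longleftrightarrow> transpose M = M"

definition pos_def_mat :: "real^'n^'n \<Rightarrow> bool" where
  "pos_def_mat M \<longleftrightarrow> (\<forall>v. v \<noteq> 0 \<longrightarrow> v \<bullet> (M *v v) > 0)"

definition locally_lipschitz :: "('a::metric_space \<Rightarrow> 'b::metric_space) \<Rightarrow> bool" where
  "locally_lipschitz g \<longleftrightarrow> (\<forall>x. \<exists>e>0. \<exists>L. L-lipschitz_on (ball x e) g)"

definition chi0 :: "(nat \<Rightarrow> 'a::real_normed_vector) \<Rightarrow> nat \<Rightarrow> real \<Rightarrow> real" where
  "chi0 x k R = (if \<forall>j\<le>k. norm (x j) \<le> R then 1 else 0)"

end

theory Submission
  imports Defs
begin
lemma psd_cs:
  fixes f :: "'a::real_inner \<Rightarrow> 'a"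
  assumes lin: "linear f" and sy: "\<And>u v. u \<bullet> f v = f u \<bullet> v"
    and psd: "\<And>v. 0 \<le> v \<bullet> f v"
  shows "(u \<bullet> f v)^2 \<le> (u \<bullet> f u) * (v \<bullet> f v)"
proof -
  define a where "a = u \<bullet> f u"
  define b where "b = u \<bullet> f v"
  define c where "c = v \<bullet> f v"
  have q: "0 \<le> a + 2*t*b + t^2*c" for t
  proof -
    have "(u + t *\<^sub>R v) \<bullet> f (u + t *\<^sub>R v) = a + 2*t*b + t^2*c"
      using sy[of v u] inner_commute[of "f v" u] unfolding a_def b_def c_def
      by (simp add: linear_add[OF lin] linear_scale[OF lin] inner_add_left inner_add_right
          power2_eq_square algebra_simps)
    then show ?thesis using psd[of "u + t *\<^sub>R v"] by simp
  qed
  have c0: "0 \<le> c" unfolding c_def by (rule psd)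
  show ?thesis
  proof (cases "c = 0")
    case True
    have "b = 0"
    proof (rule ccontr)
      assume "b \<noteq> 0"
      have "0 \<le> a + 2*(-(a+1)/(2*b))*b" using q[of "-(a+1)/(2*b)"] True by simp
      also have "\<dots> = -1" using \<open>b \<noteq> 0\<close> by (simp add: field_simps)
      finally show False by simp
    qed
    then show ?thesis using True unfolding a_def b_def c_def by simp
  next
    case False
    then have cp: "c > 0" using c0 by simp
    have "0 \<le> a + 2*(-b/c)*b + (-b/c)^2*c" by (rule q)
    also have "\<dots> = a - b^2/c" using cp by (simp add: field_simps power2_eq_square)
    finally have "b^2/c \<le> a" by simp
    then have "b^2 \<le> a * c" using cp by (simp add: field_simps)
    then show ?thesis unfolding a_def b_def c_def .
  qed
qed

lemma max_eigen:
  fixes f :: "'a::euclidean_space \<Rightarrow> 'a"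
  assumes lin: "linear f" and sy: "\<And>u v. u \<bullet> f v = f u \<bullet> v"
  shows "\<exists>\<mu> u. u \<noteq> 0 \<and> f u = \<mu> *\<^sub>R u \<and> (\<forall>v. v \<bullet> f v \<le> \<mu> * (norm v)^2)"
proof -
  have bl: "bounded_linear f" using lin linear_conv_bounded_linear by auto
  have cq: "continuous_on (sphere 0 1) (\<lambda>v. v \<bullet> f v)"
    by (intro continuous_intros bounded_linear.continuous_on[OF bl])
  obtain b :: 'a where b: "b \<in> Basis" using nonempty_Basis by blast
  have ne: "sphere (0::'a) 1 \<noteq> {}" using b by (auto simp: norm_Basis)
  obtain u where u: "u \<in> sphere 0 1" and umax: "\<And>v. v \<in> sphere 0 1 \<Longrightarrow> v \<bullet> f v \<le> u \<bullet> f u"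
    using continuous_attains_sup[OF compact_sphere ne cq] by blast
  define \<mu> where "\<mu> = u \<bullet> f u"
  have nu: "norm u = 1" using u by simp
  have bound: "v \<bullet> f v \<le> \<mu> * (norm v)^2" for v
  proof (cases "v = 0")
    case True then show ?thesis using linear_0[OF lin] by simp
  next
    case False
    define w where "w = (1 / norm v) *\<^sub>R v"
    have "w \<in> sphere 0 1" using False unfolding w_def by simp
    then have "w \<bullet> f w \<le> \<mu>" using umax unfolding \<mu>_def by blast
    moreover have "w \<bullet> f w = (v \<bullet> f v) / (norm v)^2"
      unfolding w_def by (simp add: linear_scale[OF lin] power2_eq_square)
    ultimately show ?thesis using False by (simp add: field_simps)
  qed
  define g where "g = (\<lambda>w. \<mu> *\<^sub>R w - f w)"
  have ling: "linear g" unfolding g_def by (rule linearI) (simp_all add: linear_add[OF lin] linear_scale[OF lin] algebra_simps)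
  have syg: "\<And>x y. x \<bullet> g y = g x \<bullet> y" unfolding g_def using sy
    by (simp add: inner_diff_left inner_diff_right inner_commute)
  have psdg: "\<And>v. 0 \<le> v \<bullet> g v" unfolding g_def using bound
    by (simp add: inner_diff_right power2_norm_eq_inner)
  have gu: "u \<bullet> g u = 0" unfolding g_def \<mu>_def using nu
    by (simp add: inner_diff_right power2_norm_eq_inner[symmetric])
  have "(g u \<bullet> g u)^2 \<le> (g u \<bullet> g (g u)) * (u \<bullet> g u)"
    by (rule psd_cs[OF ling syg psdg])
  then have "g u \<bullet> g u = 0" using gu by simp
  then have "g u = 0" by simp
  then have "f u = \<mu> *\<^sub>R u" unfolding g_def by simp
  moreover have "u \<noteq> 0" using nu by auto
  ultimately show ?thesis using bound by blast
qed

lemma sym_inner: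
  assumes "symmetric_mat M"
  shows "u \<bullet> (M *v v) = (M *v u) \<bullet> v"
  using assms unfolding symmetric_mat_def
  by (metis dot_lmul_matrix transpose_matrix_vector)

lemma finite_eig:
  fixes M :: "real^'n^'n"
  assumes sy: "symmetric_mat M"
  shows "finite (mat_eigenvalues M)"
proof -
  let ?E = "mat_eigenvalues M"
  define ev where "ev l = (SOME v. v \<noteq> 0 \<and> M *v v = l *\<^sub>R v)" for l
  have evp: "ev l \<noteq> 0 \<and> M *v ev l = l *\<^sub>R ev l" if "l \<in> ?E" for l
    using that someI_ex[of "\<lambda>v. v \<noteq> 0 \<and> M *v v = l *\<^sub>R v"] unfolding mat_eigenvalues_def ev_def by blast
  have orth: "ev l \<bullet> ev l' = 0" if "l \<in> ?E" "l' \<in> ?E" "l \<noteq> l'" for l l'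
  proof -
    have "l' * (ev l \<bullet> ev l') = ev l \<bullet> (M *v ev l')" using evp[OF that(2)] by simp
    also have "\<dots> = (M *v ev l) \<bullet> ev l'" by (rule sym_inner[OF sy])
    also have "\<dots> = l * (ev l \<bullet> ev l')" using evp[OF that(1)] by simp
    finally show ?thesis using that(3) by simp
  qed
  have inj: "inj_on ev ?E"
  proof (rule inj_onI)
    fix l l' assume "l \<in> ?E" "l' \<in> ?E" "ev l = ev l'"
    then show "l = l'" using orth[of l l'] evp[of l] by auto
  qed
  have "independent (ev ` ?E)"
    by (rule pairwise_orthogonal_independent)
       (auto simp: pairwise_def orthogonal_def intro!: orth dest: evp)
  then have "finite (ev ` ?E)" by (rule finiteI_independent)
  then show ?thesis using finite_imageD inj by blast
qed

lemma lam_bounds: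
  fixes M :: "real^'n^'n"
  assumes sy: "symmetric_mat M"
  shows "v \<bullet> (M *v v) \<le> lambda_max M * (norm v)^2"
    and "lambda_min M * (norm v)^2 \<le> v \<bullet> (M *v v)"
proof -
  have fin: "finite (mat_eigenvalues M)" by (rule finite_eig[OF sy])
  obtain \<mu> u where mu: "u \<noteq> 0" "M *v u = \<mu> *\<^sub>R u" "\<forall>v. v \<bullet> (M *v v) \<le> \<mu> * (norm v)^2"
    using max_eigen[of "(*v) M", OF matrix_vector_mul_linear sym_inner[OF sy]] by blast
  have "\<mu> \<in> mat_eigenvalues M" using mu unfolding mat_eigenvalues_def by blast
  then have "\<mu> \<le> lambda_max M" unfolding lambda_max_def using fin by simp
  then show "v \<bullet> (M *v v) \<le> lambda_max M * (norm v)^2"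
    using mu(3) by (meson mult_right_mono order_trans zero_le_power2)
  have linm: "linear (\<lambda>v. - (M *v v))" by (intro linear_compose_neg matrix_vector_mul_linear)
  obtain \<nu> w where nu: "w \<noteq> 0" "- (M *v w) = \<nu> *\<^sub>R w" "\<forall>v. v \<bullet> (- (M *v v)) \<le> \<nu> * (norm v)^2"
    using max_eigen[of "\<lambda>v. - (M *v v)", OF linm] sym_inner[OF sy] by force
  have "M *v w = (-\<nu>) *\<^sub>R w" using nu(2) by (metis minus_minus scaleR_minus_left)
  then have "-\<nu> \<in> mat_eigenvalues M" using nu unfolding mat_eigenvalues_def by blast
  then have "lambda_min M \<le> -\<nu>" unfolding lambda_min_def using fin by simp
  moreover have "-\<nu> * (norm v)^2 \<le> v \<bullet> (M *v v)"
  proof -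
    have "- (v \<bullet> (M *v v)) \<le> \<nu> * (norm v)^2" using nu(3) by (simp add: inner_minus_right)
    then show ?thesis by linarith
  qed
  ultimately show "lambda_min M * (norm v)^2 \<le> v \<bullet> (M *v v)"
    by (meson mult_right_mono order_trans zero_le_power2)
qed

theorem corollary3p2:
  fixes F :: "real^'p \<Rightarrow> real" and gradF :: "real^'p \<Rightarrow> real^'p"
    and Flb R :: real and x0 :: "real^'p"
    and M :: "nat \<Rightarrow> real^'p^'p" and x :: "nat \<Rightarrow> real^'p"
  assumes lb: "\<forall>y. Flb \<le> F y"
    and grad: "\<forall>y. (F has_derivative (\<lambda>h. gradF y \<bullet> h)) (at y)"
    and lip: "locally_lipschitz gradF"
    and sym: "\<forall>k. symmetric_mat (M k)"
    and pd: "\<forall>k. pos_def_mat (M k)"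
    and lim: "(\<lambda>k. lambda_max (M k)) \<longlonglongrightarrow> 0"
    and x_0: "x 0 = x0"
    and x_step: "\<forall>k. x (Suc k) = x k - M k *v gradF (x k)"
    and R: "R \<ge> 0"
  shows "\<exists>K::nat. \<forall>k\<ge>K.
    (F (x (Suc k)) - Flb) * chi0 x (Suc k) R
      \<le> (F (x k) - Flb - 1/2 * lambda_min (M k) * (norm (gradF (x k)))\<^sup>2) * chi0 x k R"
proof -
  let ?G = gradF
  have contG: "continuous_on UNIV ?G"
  proof (rule continuous_at_imp_continuous_on, rule ballI)
    fix y :: "real^'p"
    obtain e L where e: "e > 0" "L-lipschitz_on (ball y e) ?G"
      using lip unfolding locally_lipschitz_def by blast
    have "continuous_on (ball y e) ?G" by (rule lipschitz_on_continuous_on[OF e(2)])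
    then show "isCont ?G y" using e(1) by (simp add: continuous_on_interior)
  qed
  obtain B0 where B0: "\<And>y. y \<in> cball 0 R \<Longrightarrow> norm (?G y) \<le> B0"
  proof -
    have "compact (?G ` cball 0 R)"
      by (rule compact_continuous_image[OF continuous_on_subset[OF contG] compact_cball]) simp
    then show ?thesis using that compact_imp_bounded bounded_iff by (metis image_eqI)
  qed
  define Gb where "Gb = max B0 1"
  have Gb: "\<And>y. y \<in> cball 0 R \<Longrightarrow> norm (?G y) \<le> Gb" "Gb \<ge> 1"
    using B0 unfolding Gb_def by force+
  define C where "C = cball (0::real^'p) (R+1)"
  have ll: "local_lipschitz {0::real} C (\<lambda>t. ?G)"
  proof (rule local_lipschitzI)
    fix t :: real and y assume "y \<in> C"
    obtain e L where e: "e > 0" "L-lipschitz_on (ball y e) ?G"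
      using lip unfolding locally_lipschitz_def by blast
    have "L-lipschitz_on (cball y (e/2) \<inter> C) ?G"
      by (rule lipschitz_on_subset[OF e(2)]) (use e(1) in auto)
    then show "\<exists>u>0. \<exists>L. \<forall>t \<in> cball t u \<inter> {0}. L-lipschitz_on (cball y u \<inter> C) ?G"
      using e(1) by (intro exI[of _ "e/2"]) auto
  qed
  obtain L0 where L0: "L0-lipschitz_on C ?G"
  proof -
    have cC: "compact C" unfolding C_def by simp
    obtain L1 where "\<And>t. t \<in> {0::real} \<Longrightarrow> L1-lipschitz_on C ?G"
      using local_lipschitz_compact_implies_lipschitz[OF ll cC compact_sing] by auto
    then show ?thesis using that by blast
  qed
  define L where "L = max L0 Gb"
  have LC: "L-lipschitz_on C ?G" using L0 unfolding L_def by (rule lipschitz_on_le) simp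
  have LGb: "Gb \<le> L" and Lpos: "L > 0" using Gb unfolding L_def by auto
  have descent: "F (y - d) \<le> F y - ?G y \<bullet> d + L * (norm d)^2"
    if y: "norm y \<le> R" and d: "norm d \<le> 1" for y d
  proof -
    define \<phi> where "\<phi> t = F (y - t *\<^sub>R d)" for t :: real
    have der: "(\<phi> has_derivative (\<lambda>s. ?G (y - t *\<^sub>R d) \<bullet> (- (s *\<^sub>R d)))) (at t within {0..1})" for t
    proof -
      have "((\<lambda>t. y - t *\<^sub>R d) has_derivative (\<lambda>s. - (s *\<^sub>R d))) (at t within {0..1})"
        by (auto intro!: derivative_eq_intros)
      from has_derivative_compose[OF this grad[rule_format, of "y - t *\<^sub>R d"]]
      show ?thesis unfolding \<phi>_def o_def by simp
    qed
    obtain t where t: "t \<in> {0..1}" and eq: "\<phi> 1 - \<phi> 0 = ?G (y - t *\<^sub>R d) \<bullet> (- ((1 - 0) *\<^sub>R d))"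
      using mvt_very_simple[of 0 1 \<phi>, OF _ der] by auto
    have in1: "y - t *\<^sub>R d \<in> C"
    proof -
      have "norm (y - t *\<^sub>R d) \<le> norm y + \<bar>t\<bar> * norm d" using norm_triangle_ineq4[of y "t *\<^sub>R d"] by simp
      also have "\<dots> \<le> R + 1"
      proof -
        have "\<bar>t\<bar> * norm d \<le> 1" using t d by (intro mult_le_one) auto
        then show ?thesis using y by linarith
      qed
      finally show ?thesis unfolding C_def by simp
    qed
    have in2: "y \<in> C" using y unfolding C_def by simp
    have "norm (?G (y - t *\<^sub>R d) - ?G y) \<le> L * dist (y - t *\<^sub>R d) y"
      using lipschitz_onD[OF LC in1 in2] by (simp add: dist_norm)
    also have "dist (y - t *\<^sub>R d) y = \<bar>t\<bar> * norm d" by (simp add: dist_norm)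
    also have "L * (\<bar>t\<bar> * norm d) \<le> L * norm d"
      using t Lpos by (intro mult_left_mono) (auto intro: mult_left_le_one_le)
    finally have lipb: "norm (?G (y - t *\<^sub>R d) - ?G y) \<le> L * norm d" .
    have "(?G y - ?G (y - t *\<^sub>R d)) \<bullet> d \<le> norm (?G (y - t *\<^sub>R d) - ?G y) * norm d"
      by (metis Cauchy_Schwarz_ineq2 abs_le_D1 norm_minus_commute)
    also have "\<dots> \<le> L * norm d * norm d" using lipb by (simp add: mult_right_mono)
    finally have "(?G y - ?G (y - t *\<^sub>R d)) \<bullet> d \<le> L * (norm d)^2" by (simp add: power2_eq_square)
    then show ?thesis using eq unfolding \<phi>_def by (simp add: inner_diff_left)
  qed
  have "\<forall>\<^sub>F k in sequentially. dist (lambda_max (M k)) 0 < 1 / (2*L)"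
    using lim Lpos by (simp add: tendsto_iff)
  then obtain K where K: "\<And>k. k \<ge> K \<Longrightarrow> \<bar>lambda_max (M k)\<bar> < 1 / (2*L)"
    by (auto simp: eventually_sequentially)
  show ?thesis
  proof (intro exI allI impI)
    fix k assume "K \<le> k"
    define \<mu> where "\<mu> = lambda_max (M k)"
    define \<nu> where "\<nu> = lambda_min (M k)"
    define g where "g = ?G (x k)"
    have mub: "\<mu> < 1/(2*L)" using K[OF \<open>K \<le> k\<close>] unfolding \<mu>_def by simp
    have q1: "v \<bullet> (M k *v v) \<le> \<mu> * (norm v)^2" for v unfolding \<mu>_def by (rule lam_bounds(1)[OF sym[rule_format]])
    have q2: "\<nu> * (norm v)^2 \<le> v \<bullet> (M k *v v)" for v unfolding \<nu>_def by (rule lam_bounds(2)[OF sym[rule_format]])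
    have psd: "0 \<le> v \<bullet> (M k *v v)" for v
      using pd[rule_format, of k] unfolding pos_def_mat_def by (cases "v = 0") (auto intro: less_imp_le)
    obtain b :: "real^'p" where b: "b \<in> Basis" using nonempty_Basis by blast
    have b1: "norm b = 1" using b by simp
    have "b \<noteq> 0" using b1 by auto
    then have "0 < b \<bullet> (M k *v b)" using pd[rule_format, of k] unfolding pos_def_mat_def by blast
    then have mu0: "0 < \<mu>" using q1[of b] b1 by simp
    have numu: "\<nu> \<le> \<mu>" using q1[of b] q2[of b] b1 by simp
    have cs: "((M k *v g) \<bullet> (M k *v g))^2 \<le> ((M k *v g) \<bullet> (M k *v (M k *v g))) * (g \<bullet> (M k *v g))"
      by (rule psd_cs[OF matrix_vector_mul_linear sym_inner[OF sym[rule_format]] psd])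
    have Mg2: "(norm (M k *v g))^2 \<le> \<mu> * (g \<bullet> (M k *v g))"
    proof (cases "M k *v g = 0")
      case True then show ?thesis using psd[of g] mu0 by simp
    next
      case False
      let ?n = "(norm (M k *v g))^2"
      have e: "(M k *v g) \<bullet> (M k *v g) = ?n" by (simp add: power2_norm_eq_inner)
      have "?n * ?n \<le> ((M k *v g) \<bullet> (M k *v (M k *v g))) * (g \<bullet> (M k *v g))"
        using cs unfolding e by (simp add: power2_eq_square)
      also have "\<dots> \<le> (\<mu> * ?n) * (g \<bullet> (M k *v g))"
        using q1[of "M k *v g"] psd[of g] by (rule mult_right_mono)
      finally have "?n * ?n \<le> (\<mu> * ?n) * (g \<bullet> (M k *v g))" .
      then have "?n * ?n \<le> ?n * (\<mu> * (g \<bullet> (M k *v g)))" by (simp add: algebra_simps)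
      moreover have "?n > 0" using False by simp
      ultimately show ?thesis by (meson mult_le_cancel_left_pos)
    qed
    have Mgn: "norm (M k *v g) \<le> \<mu> * norm g"
    proof (cases "M k *v g = 0")
      case True then show ?thesis using mu0 by simp
    next
      case False
      have "(norm (M k *v g))^2 \<le> \<mu> * (norm g * norm (M k *v g))"
        using Mg2 mu0 Cauchy_Schwarz_ineq2[of g "M k *v g"]
        by (meson abs_le_D1 mult_left_mono order_trans less_imp_le)
      then have "norm (M k *v g) * norm (M k *v g) \<le> (\<mu> * norm g) * norm (M k *v g)"
        by (simp add: power2_eq_square algebra_simps)
      then show ?thesis using False by simp
    qed
    show "(F (x (Suc k)) - Flb) * chi0 x (Suc k) R
      \<le> (F (x k) - Flb - 1/2 * lambda_min (M k) * (norm (gradF (x k)))\<^sup>2) * chi0 x k R"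
    proof (cases "\<forall>j\<le>k. norm (x j) \<le> R")
      case False
      then have "\<not> (\<forall>j\<le>Suc k. norm (x j) \<le> R)" using le_SucI by blast
      then have "chi0 x (Suc k) R = 0" "chi0 x k R = 0" using False unfolding chi0_def by (simp_all only: if_False)
      then show ?thesis by simp
    next
      case True
      then have xk: "norm (x k) \<le> R" by simp
      have gb: "norm g \<le> Gb" using Gb(1)[of "x k"] xk unfolding g_def by simp
      show ?thesis
      proof (cases "\<forall>j\<le>Suc k. norm (x j) \<le> R")
        case True2: True
        have dn: "norm (M k *v g) \<le> 1"
        proof -
          have "\<mu> * norm g \<le> (1/(2*L)) * Gb" using mub gb mu0 Lpos by (intro mult_mono) auto
          also have "\<dots> \<le> 1" using LGb Lpos by (simp add: field_simps)
          finally show ?thesis using Mgn by simp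
        qed
        have "F (x (Suc k)) \<le> F (x k) - g \<bullet> (M k *v g) + L * (norm (M k *v g))^2"
          using descent[OF xk dn] x_step unfolding g_def by simp
        also have "L * (norm (M k *v g))^2 \<le> L * (\<mu> * (g \<bullet> (M k *v g)))"
          using Mg2 Lpos by simp
        also have "L * (\<mu> * (g \<bullet> (M k *v g))) \<le> 1/2 * (g \<bullet> (M k *v g))"
        proof -
          have "L * \<mu> \<le> 1/2" using mub Lpos by (simp add: field_simps)
          then show ?thesis using psd[of g] by (metis mult.assoc mult_right_mono)
        qed
        finally have "F (x (Suc k)) \<le> F (x k) - 1/2 * (g \<bullet> (M k *v g))" by simp
        also have "\<dots> \<le> F (x k) - 1/2 * \<nu> * (norm g)^2" using q2[of g] by simp
        finally show ?thesis using True True2 unfolding chi0_def g_def \<nu>_def by simp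
      next
        case False
        define d where "d = (1/(2*L)) *\<^sub>R g"
        have dn: "norm d \<le> 1" unfolding d_def using gb LGb Lpos by (simp add: field_simps)
        have "F (x k - d) \<le> F (x k) - g \<bullet> d + L * (norm d)^2"
          using descent[OF xk dn] unfolding g_def by simp
        also have "\<dots> = F (x k) - (norm g)^2 / (4*L)"
          unfolding d_def using Lpos
          by (simp add: power2_norm_eq_inner[symmetric] power_mult_distrib field_simps power2_eq_square)
        finally have "Flb \<le> F (x k) - (norm g)^2 / (4*L)" using lb by (meson order_trans)
        moreover have "1/2 * \<nu> * (norm g)^2 \<le> (norm g)^2 / (4*L)"
        proof -
          have "\<nu> \<le> 1/(2*L)" using numu mub by simp
          then have "1/2 * \<nu> * (norm g)^2 \<le> 1/2 * (1/(2*L)) * (norm g)^2"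
            by (intro mult_right_mono) auto
          then show ?thesis by simp
        qed
        moreover have "chi0 x (Suc k) R = 0" "chi0 x k R = 1" using True False unfolding chi0_def by (simp_all only: if_P if_not_P if_False)
        ultimately show ?thesis unfolding g_def \<nu>_def by simp
      qed
    qed
  qed
qed

end
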